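(* Let $n\ge2$, $p\in(1,2)\cup(2,\infty)$. Let $\Omega\subset\mathbb{R}^n$ be a domain, $T>0$, $u$ a viscosity solution of $u_t-\Delta u-(p-2)\frac{\langle D^2uDu,Du\rangle}{|Du|^2}=0$ in $\Omega\times(0,T)$, $U\Subset\Omega$ a smooth domain, $U_T=U\times(0,T)$, $\varepsilon\in(0,1]$, and let $u^\varepsilon\in C^0(\overline{U_T})\cap C^\infty(U_T)$ be the viscosity solution of $u^\varepsilon_t-\Delta u^\varepsilon-(p-2)\frac{\langle D^2u^\varepsilon Du^\varepsilon,Du^\varepsilon\rangle}{|Du^\varepsilon|^2+\varepsilon}=0$ in $U_T$ with $u^\varepsilon=u$ on the parabolic boundary of $U_T$. Let $Q_{2r}=(s-4r^2,s)\times B(z,2r)\Subset U_T$ and $\phi\in C_c^\infty(B(z,2r)\times(s-4r^2,s+4r^2))$. Then for any $\vec c\in\mathbb{R}^n$ and $\eta>0$, $$\int_{Q_{2r}}\Delta u^\varepsilon\,u^\varepsilon_t\,\phi^2\,dx\,dt\le\eta\int_{Q_{2r}}|D^2u^\varepsilon|^2\phi^2\,dx\,dt+\frac{C}{\eta}\int_{Q_{2r}}|Du^\varepsilon-\vec c|^2\big[|D\phi|^2+|\phi\phi_t|\big]\,dx\,dt,$$ where $C$ depends only on $n$ and $p$.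
   Context: $D$, $D^2$ denote spatial derivatives. *)

theory Defs
  imports "HOL-Analysis.Analysis"
begin

definition pdir :: "'a::euclidean_space \<Rightarrow> ('a \<Rightarrow> real) \<Rightarrow> 'a \<Rightarrow> real" where
  "pdir v f z = deriv (\<lambda>h. f (z + h *\<^sub>R v)) 0"

fun pdl :: "'a::euclidean_space list \<Rightarrow> ('a \<Rightarrow> real) \<Rightarrow> 'a \<Rightarrow> real" where
  "pdl [] f = f"
| "pdl (v # vs) f = pdir v (pdl vs f)"

definition Ck_on :: "nat \<Rightarrow> 'a::euclidean_space set \<Rightarrow> ('a \<Rightarrow> real) \<Rightarrow> bool" where
  "Ck_on k S f \<longleftrightarrow>
     (\<forall>vs. set vs \<subseteq> Basis \<and> length vs \<le> k \<longrightarrow>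
        continuous_on S (pdl vs f) \<and>
        (length vs < k \<longrightarrow> (\<forall>v\<in>Basis. \<forall>z\<in>S.
            ((\<lambda>h. pdl vs f (z + h *\<^sub>R v)) has_real_derivative pdl (v # vs) f z) (at 0))))"

definition smooth_on :: "'a::euclidean_space set \<Rightarrow> ('a \<Rightarrow> real) \<Rightarrow> bool" where
  "smooth_on S f \<longleftrightarrow> (\<forall>k. Ck_on k S f)"

definition Cc_inf :: "'a::euclidean_space set \<Rightarrow> ('a \<Rightarrow> real) \<Rightarrow> bool" where
  "Cc_inf S f \<longleftrightarrow> smooth_on S f \<and> compact (closure {z. f z \<noteq> 0})
                   \<and> closure {z. f z \<noteq> 0} \<subseteq> S"

definition sdir :: "'n::finite \<Rightarrow> (real^'n) \<times> real" where
  "sdir i = (axis i 1, 0)"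

definition Dx :: "((real^'n::finite) \<times> real \<Rightarrow> real) \<Rightarrow> (real^'n) \<times> real \<Rightarrow> real^'n" where
  "Dx f z = (\<chi> i. pdl [sdir i] f z)"

definition D2x :: "((real^'n::finite) \<times> real \<Rightarrow> real) \<Rightarrow> (real^'n) \<times> real \<Rightarrow> real^'n^'n" where
  "D2x f z = (\<chi> i j. pdl [sdir i, sdir j] f z)"

definition Dt :: "((real^'n::finite) \<times> real \<Rightarrow> real) \<Rightarrow> (real^'n) \<times> real \<Rightarrow> real" where
  "Dt f z = pdl [(0, 1)] f z"

definition Lap :: "((real^'n::finite) \<times> real \<Rightarrow> real) \<Rightarrow> (real^'n) \<times> real \<Rightarrow> real" where
  "Lap f z = trace (D2x f z)"

text \<open>For eps > 0 the operator
  a - tr X - (p-2) <X q, q> / (|q|^2 + eps)  is continuous; for eps = 0 it is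
  singular at q = 0, and (as usual) the semicontinuous envelopes are used there,
  which amounts to testing with  a - tr X - (p-2) <X e, e>  for all unit vectors e.\<close>

definition visc_super :: "real \<Rightarrow> real \<Rightarrow> ((real^'n::finite) \<times> real) set
                          \<Rightarrow> ((real^'n) \<times> real \<Rightarrow> real) \<Rightarrow> bool" where
  "visc_super p eps S u \<longleftrightarrow>
    (\<forall>z0\<in>S. \<forall>N \<phi>. open N \<and> z0 \<in> N \<and> N \<subseteq> S \<and> Ck_on 2 N \<phi> \<and> \<phi> z0 = u z0
        \<and> (\<forall>z\<in>N. \<phi> z \<le> u z) \<longrightarrow>
      (if eps > 0 \<or> Dx \<phi> z0 \<noteq> 0
       then Dt \<phi> z0 - Lap \<phi> z0
              - (p - 2) * (((D2x \<phi> z0) *v (Dx \<phi> z0)) \<bullet> Dx \<phi> z0) / ((norm (Dx \<phi> z0))\<^sup>2 + eps) \<ge> 0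
       else (\<forall>e. norm e = 1 \<longrightarrow>
               Dt \<phi> z0 - Lap \<phi> z0 - (p - 2) * (((D2x \<phi> z0) *v e) \<bullet> e) \<ge> 0)))"

definition visc_sub :: "real \<Rightarrow> real \<Rightarrow> ((real^'n::finite) \<times> real) set
                          \<Rightarrow> ((real^'n) \<times> real \<Rightarrow> real) \<Rightarrow> bool" where
  "visc_sub p eps S u \<longleftrightarrow>
    (\<forall>z0\<in>S. \<forall>N \<phi>. open N \<and> z0 \<in> N \<and> N \<subseteq> S \<and> Ck_on 2 N \<phi> \<and> \<phi> z0 = u z0
        \<and> (\<forall>z\<in>N. \<phi> z \<ge> u z) \<longrightarrow>
      (if eps > 0 \<or> Dx \<phi> z0 \<noteq> 0
       then Dt \<phi> z0 - Lap \<phi> z0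
              - (p - 2) * (((D2x \<phi> z0) *v (Dx \<phi> z0)) \<bullet> Dx \<phi> z0) / ((norm (Dx \<phi> z0))\<^sup>2 + eps) \<le> 0
       else (\<forall>e. norm e = 1 \<longrightarrow>
               Dt \<phi> z0 - Lap \<phi> z0 - (p - 2) * (((D2x \<phi> z0) *v e) \<bullet> e) \<le> 0)))"

definition visc_sol :: "real \<Rightarrow> real \<Rightarrow> ((real^'n::finite) \<times> real) set
                          \<Rightarrow> ((real^'n) \<times> real \<Rightarrow> real) \<Rightarrow> bool" where
  "visc_sol p eps S u \<longleftrightarrow> continuous_on S u \<and> visc_super p eps S u \<and> visc_sub p eps S u"

definition domain :: "'a::euclidean_space set \<Rightarrow> bool" where
  "domain \<Omega> \<longleftrightarrow> open \<Omega> \<and> connected \<Omega> \<and> \<Omega> \<noteq> {}"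

definition smooth_domain :: "(real^'n::finite) set \<Rightarrow> bool" where
  "smooth_domain U \<longleftrightarrow> domain U \<and>
     (\<forall>x\<in>frontier U. \<exists>\<rho>>0. \<exists>\<psi>. smooth_on (ball x \<rho>) \<psi>
        \<and> (\<forall>y\<in>ball x \<rho>. (\<chi> i. pdl [axis i 1] \<psi> y) \<noteq> 0)
        \<and> U \<inter> ball x \<rho> = {y\<in>ball x \<rho>. \<psi> y < 0})"

definition compactly_contained :: "'a::euclidean_space set \<Rightarrow> 'a set \<Rightarrow> bool" where
  "compactly_contained A B \<longleftrightarrow> bounded A \<and> closure A \<subseteq> B"

definition par_boundary :: "(real^'n::finite) set \<Rightarrow> real \<Rightarrow> ((real^'n) \<times> real) set" where
  "par_boundary U T = (closure U \<times> {0}) \<union> (frontier U \<times> {0..T})"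

end

theory Submission
  imports Defs
begin


lemma ev_nhds_dir:
  fixes w :: "'a::real_normed_vector"
  assumes "open W" "w \<in> W"
  shows "\<forall>\<^sub>F h in nhds (0::real). w + h *\<^sub>R v \<in> W"
proof -
  have "((\<lambda>h::real. w + h *\<^sub>R v) \<longlongrightarrow> w + 0 *\<^sub>R v) (at 0)"
    by (intro tendsto_intros)
  then have "\<forall>\<^sub>F h in at (0::real). w + h *\<^sub>R v \<in> W"
    using topological_tendstoD[OF _ assms(1)] assms(2) by auto
  then show ?thesis using assms(2) by (simp add: eventually_nhds_conv_at)
qed

lemma zero_near_deriv:
  fixes F :: "'a::real_normed_vector \<Rightarrow> real"
  assumes "open W" "w \<in> W" "\<forall>y\<in>W. F y = 0"
  shows "((\<lambda>h. F (w + h *\<^sub>R v)) has_real_derivative 0) (at 0)"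
proof -
  have "\<forall>\<^sub>F h in nhds (0::real). F (w + h *\<^sub>R v) = 0"
    using ev_nhds_dir[OF assms(1,2), of v] assms(3) by (auto elim: eventually_mono)
  then show ?thesis
    using DERIV_cong_ev[of 0 0 "\<lambda>h. F (w + h *\<^sub>R v)" "\<lambda>_. 0" 0 0] by simp
qed

lemma zero_near_cont:
  assumes "open W" "w \<in> W" "\<forall>y\<in>W. F y = 0"
  shows "isCont F w"
proof -
  have "continuous_on W F"
    using continuous_on_cong[of W W F "\<lambda>_. 0"] assms(3) by simp
  then show ?thesis using assms(1,2) continuous_on_eq_continuous_at by blast
qed

lemma pdl_zero:
  fixes f :: "'a::euclidean_space \<Rightarrow> real"
  assumes "open W" "\<forall>y\<in>W. f y = 0" "y \<in> W"
  shows "pdl vs f y = 0"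
  using assms(3)
proof (induction vs arbitrary: y)
  case Nil then show ?case using assms(2) by simp
next
  case (Cons v vs)
  have "((\<lambda>h. pdl vs f (y + h *\<^sub>R v)) has_real_derivative 0) (at 0)"
    by (rule zero_near_deriv[OF assms(1) Cons.prems]) (use Cons.IH in auto)
  then show ?case by (simp add: pdir_def DERIV_imp_deriv)
qed

lemma smooth_cont:
  assumes "smooth_on Om f" "open Om" "set vs \<subseteq> Basis" "w \<in> Om"
  shows "isCont (pdl vs f) w"
proof -
  have "Ck_on (length vs) Om f" using assms(1) by (simp add: smooth_on_def)
  then have "continuous_on Om (pdl vs f)" using assms(3) by (simp add: Ck_on_def)
  then show ?thesis using assms(2,4) continuous_on_eq_continuous_at by blast
qed

lemma smooth_der:
  assumes "smooth_on Om f" "set vs \<subseteq> Basis" "v \<in> Basis" "w \<in> Om"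
  shows "((\<lambda>h. pdl vs f (w + h *\<^sub>R v)) has_real_derivative pdl (v # vs) f w) (at 0)"
proof -
  have "Ck_on (Suc (length vs)) Om f" using assms(1) by (simp add: smooth_on_def)
  then show ?thesis using assms(2-4) unfolding Ck_on_def by auto
qed

lemma dir_shift:
  fixes F :: "'a::real_normed_vector \<Rightarrow> real"
  assumes "((\<lambda>k. F (q a0 + k *\<^sub>R v)) has_real_derivative D) (at 0)"
    and "\<And>a k. q (a + k) = q a + k *\<^sub>R v"
  shows "((\<lambda>a. F (q a)) has_real_derivative D) (at a0)"
proof -
  have "(\<lambda>k. F (q (k + a0))) = (\<lambda>k. F (q a0 + k *\<^sub>R v))"
  proof
    fix k show "F (q (k + a0)) = F (q a0 + k *\<^sub>R v)"
      using assms(2)[of a0 k] by (simp add: add.commute)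
  qed
  then have "((\<lambda>k. (\<lambda>a. F (q a)) (k + a0)) has_real_derivative D) (at 0)"
    using assms(1) by simp
  then show ?thesis using DERIV_shift[of "\<lambda>a. F (q a)" D 0 a0] by simp
qed

lemma schwarz:
  fixes f f1 f2 f12 f21 :: "'a::real_normed_vector \<Rightarrow> real"
  assumes "open Om" "w \<in> Om"
  and d1: "\<And>y. y \<in> Om \<Longrightarrow> ((\<lambda>h. f (y + h *\<^sub>R v1)) has_real_derivative f1 y) (at 0)"
  and d2: "\<And>y. y \<in> Om \<Longrightarrow> ((\<lambda>h. f (y + h *\<^sub>R v2)) has_real_derivative f2 y) (at 0)"
  and d12: "\<And>y. y \<in> Om \<Longrightarrow> ((\<lambda>h. f1 (y + h *\<^sub>R v2)) has_real_derivative f12 y) (at 0)"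
  and d21: "\<And>y. y \<in> Om \<Longrightarrow> ((\<lambda>h. f2 (y + h *\<^sub>R v1)) has_real_derivative f21 y) (at 0)"
  and c12: "continuous_on Om f12" and c21: "continuous_on Om f21"
  shows "f12 w = f21 w"
proof (rule ccontr)
  assume ne: "f12 w \<noteq> f21 w"
  define d where "d = \<bar>f12 w - f21 w\<bar>"
  have d0: "d > 0" using ne by (simp add: d_def)
  have i12: "isCont f12 w" and i21: "isCont f21 w"
    using c12 c21 assms(1,2) continuous_on_eq_continuous_at by blast+
  obtain e0 where e0: "e0 > 0" "ball w e0 \<subseteq> Om" using assms(1,2) openE by blast
  obtain e1 where e1: "e1 > 0" "\<And>y. dist y w < e1 \<Longrightarrow> dist (f12 y) (f12 w) < d/2"
    using i12 d0 unfolding continuous_at_eps_delta by (meson half_gt_zero)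
  obtain e2 where e2: "e2 > 0" "\<And>y. dist y w < e2 \<Longrightarrow> dist (f21 y) (f21 w) < d/2"
    using i21 d0 unfolding continuous_at_eps_delta by (meson half_gt_zero)
  define \<delta> where "\<delta> = min e0 (min e1 e2)"
  have \<delta>0: "\<delta> > 0" using e0 e1 e2 by (simp add: \<delta>_def)
  define h where "h = \<delta> / (2 * (norm v1 + norm v2 + 1))"
  have np: "norm v1 + norm v2 + 1 > 0" by (smt (verit) norm_ge_zero)
  then have h0: "h > 0" using \<delta>0 unfolding h_def by (intro divide_pos_pos) auto
  define P where "P a b = w + a *\<^sub>R v1 + b *\<^sub>R v2" for a b
  have inb: "dist (P a b) w < \<delta>" if "a \<in> {0..h}" "b \<in> {0..h}" for a b
  proof -
    have "dist (P a b) w = norm (a *\<^sub>R v1 + b *\<^sub>R v2)" by (simp add: P_def dist_norm)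
    also have "\<dots> \<le> a * norm v1 + b * norm v2"
      using that by (metis atLeastAtMost_iff norm_scaleR norm_triangle_le abs_of_nonneg order_refl)
    also have "\<dots> \<le> h * norm v1 + h * norm v2"
      using that by (intro add_mono mult_right_mono) auto
    also have "\<dots> < \<delta>"
    proof -
      have "h * (norm v1 + norm v2) < h * (2 * (norm v1 + norm v2 + 1))"
        using h0 np by (intro mult_strict_left_mono) auto
      also have "\<dots> = \<delta>" unfolding h_def using np by simp
      finally show ?thesis by (simp add: distrib_left)
    qed
    finally show ?thesis .
  qed
  have inO: "P a b \<in> Om" if "a \<in> {0..h}" "b \<in> {0..h}" for a b
    using inb[OF that] e0 \<delta>_def by (auto simp: dist_commute)
  have small12: "\<bar>f12 (P a b) - f12 w\<bar> < d/2" if "a \<in> {0..h}" "b \<in> {0..h}" for a b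
    using e1(2)[of "P a b"] inb[OF that] \<delta>_def by (simp add: dist_real_def)
  have small21: "\<bar>f21 (P a b) - f21 w\<bar> < d/2" if "a \<in> {0..h}" "b \<in> {0..h}" for a b
    using e2(2)[of "P a b"] inb[OF that] \<delta>_def by (simp add: dist_real_def)
  have qa: "P (a + k) b = P a b + k *\<^sub>R v1" for a b k
    by (simp add: P_def scaleR_add_left algebra_simps)
  have qb: "P a (b + k) = P a b + k *\<^sub>R v2" for a b k
    by (simp add: P_def scaleR_add_left algebra_simps)
  have Da: "((\<lambda>a. F (P a b)) has_real_derivative F' (P a0 b)) (at a0)"
    if "\<And>y. y \<in> Om \<Longrightarrow> ((\<lambda>k. F (y + k *\<^sub>R v1)) has_real_derivative F' y) (at 0)"
       "P a0 b \<in> Om" for F F' a0 b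
    using dir_shift[of F "\<lambda>a. P a b" a0 v1 "F' (P a0 b)"] that qa by blast
  have Db: "((\<lambda>b. F (P a b)) has_real_derivative F' (P a b0)) (at b0)"
    if "\<And>y. y \<in> Om \<Longrightarrow> ((\<lambda>k. F (y + k *\<^sub>R v2)) has_real_derivative F' y) (at 0)"
       "P a b0 \<in> Om" for F F' a b0
    using dir_shift[of F "\<lambda>b. P a b" b0 v2 "F' (P a b0)"] that qb by blast
  define \<Delta> where "\<Delta> = f (P h h) - f (P h 0) - f (P 0 h) + f (P 0 0)"
  obtain \<alpha> where \<alpha>: "0 < \<alpha>" "\<alpha> < h"
    "(f (P h h) - f (P h 0)) - (f (P 0 h) - f (P 0 0)) = (h - 0) * (f1 (P \<alpha> h) - f1 (P \<alpha> 0))"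
  proof -
    have "\<exists>z>0. z < h \<and> (\<lambda>a. f (P a h) - f (P a 0)) h - (\<lambda>a. f (P a h) - f (P a 0)) 0
        = (h - 0) * (\<lambda>a. f1 (P a h) - f1 (P a 0)) z"
      by (rule MVT2[OF h0]) (intro DERIV_diff Da[OF d1] inO; auto)
    then show ?thesis using that by auto
  qed
  obtain \<beta> where \<beta>: "0 < \<beta>" "\<beta> < h" "f1 (P \<alpha> h) - f1 (P \<alpha> 0) = (h - 0) * f12 (P \<alpha> \<beta>)"
  proof -
    have "\<exists>z>0. z < h \<and> (\<lambda>b. f1 (P \<alpha> b)) h - (\<lambda>b. f1 (P \<alpha> b)) 0 = (h - 0) * (\<lambda>b. f12 (P \<alpha> b)) z"
      by (rule MVT2[OF h0]) (intro Db[OF d12] inO; use \<alpha> in auto)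
    then show ?thesis using that by auto
  qed
  obtain \<beta>' where \<beta>': "0 < \<beta>'" "\<beta>' < h"
    "(f (P h h) - f (P 0 h)) - (f (P h 0) - f (P 0 0)) = (h - 0) * (f2 (P h \<beta>') - f2 (P 0 \<beta>'))"
  proof -
    have "\<exists>z>0. z < h \<and> (\<lambda>b. f (P h b) - f (P 0 b)) h - (\<lambda>b. f (P h b) - f (P 0 b)) 0
        = (h - 0) * (\<lambda>b. f2 (P h b) - f2 (P 0 b)) z"
      by (rule MVT2[OF h0]) (intro DERIV_diff Db[OF d2] inO; auto)
    then show ?thesis using that by auto
  qed
  obtain \<alpha>' where \<alpha>': "0 < \<alpha>'" "\<alpha>' < h" "f2 (P h \<beta>') - f2 (P 0 \<beta>') = (h - 0) * f21 (P \<alpha>' \<beta>')"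
  proof -
    have "\<exists>z>0. z < h \<and> (\<lambda>a. f2 (P a \<beta>')) h - (\<lambda>a. f2 (P a \<beta>')) 0 = (h - 0) * (\<lambda>a. f21 (P a \<beta>')) z"
      by (rule MVT2[OF h0]) (intro Da[OF d21] inO; use \<beta>' in auto)
    then show ?thesis using that by auto
  qed
  have "h * h * f12 (P \<alpha> \<beta>) = h * h * f21 (P \<alpha>' \<beta>')"
    using \<alpha>(3) \<beta>(3) \<beta>'(3) \<alpha>'(3) by (simp add: algebra_simps)
  then have eq: "f12 (P \<alpha> \<beta>) = f21 (P \<alpha>' \<beta>')" using h0 by simp
  have "\<bar>f12 (P \<alpha> \<beta>) - f12 w\<bar> < d/2" using small12 \<alpha> \<beta> by auto
  moreover have "\<bar>f21 (P \<alpha>' \<beta>') - f21 w\<bar> < d/2" using small21 \<alpha>' \<beta>' by auto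
  ultimately have "\<bar>f12 w - f21 w\<bar> < d" using eq by linarith
  then show False by (simp add: d_def)
qed

lemma box_mem:
  fixes z y :: "real^'n"
  assumes "y \<in> ball z R" "\<bar>h\<bar> < 1"
  shows "y - h *\<^sub>R axis i 1 \<in> cbox (z - (\<chi> j. R + 1)) (z + (\<chi> j. R + 1))"
proof -
  have "\<bar>(y - h *\<^sub>R axis i 1) $ j - z $ j\<bar> < R + 1" for j
  proof -
    have "\<bar>y $ j - z $ j\<bar> \<le> norm (y - z)" using component_le_norm_cart[of "y - z" j] by simp
    also have "\<dots> < R" using assms(1) by (simp add: dist_norm norm_minus_commute)
    finally have a: "\<bar>y $ j - z $ j\<bar> < R" .
    have b: "\<bar>(h *\<^sub>R axis i (1::real)) $ j\<bar> < 1" using assms(2) by (simp add: axis_def)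
    show ?thesis using a b by simp
  qed
  then show ?thesis unfolding mem_box_cart
  proof (intro allI conjI)
    fix j assume a: "\<And>j. \<bar>(y - h *\<^sub>R axis i 1) $ j - z $ j\<bar> < R + 1"
    show "(z - (\<chi> j. R + 1)) $ j \<le> (y - h *\<^sub>R axis i 1) $ j" using a[of j] by simp
    show "(y - h *\<^sub>R axis i 1) $ j \<le> (z + (\<chi> j. R + 1)) $ j" using a[of j] by simp
  qed
qed




lemma slice_ibp:
  fixes g g' :: "real^'n \<Rightarrow> real" and z :: "real^'n"
  assumes dg: "\<And>x. ((\<lambda>h. g (x + h *\<^sub>R axis i 1)) has_real_derivative g' x) (at 0)"
    and cg: "continuous_on UNIV g" and cg': "continuous_on UNIV g'"
    and zg: "\<And>x. x \<notin> ball z R \<Longrightarrow> g x = 0"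
  shows "integral (cbox (z - (\<chi> j. R + 1)) (z + (\<chi> j. R + 1))) g' = 0"
proof -
  define e where "e = axis i (1::real)"
  define bx where "bx = cbox (z - (\<chi> j. R + 1)) (z + (\<chi> j. R + 1))"
  define \<Phi> where "\<Phi> h = integral bx (\<lambda>x. g (x + h *\<^sub>R e))" for h :: real
  have intg: "g integrable_on bx" unfolding bx_def
    by (rule integrable_continuous) (use cg continuous_on_subset in blast)
  have const: "\<Phi> h = \<Phi> 0" if "h \<in> ball 0 1" for h
  proof -
    have h1: "\<bar>h\<bar> < 1" using that by simp
    define c where "c = h *\<^sub>R e"
    have hI: "(g has_integral integral bx g) (cbox (z - (\<chi> j. R + 1)) (z + (\<chi> j. R + 1)))"
      using integrable_integral[OF intg] by (simp only: bx_def)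
    have aff: "((\<lambda>x. g (1 *\<^sub>R x + c)) has_integral (1 / (\<bar>1\<bar> ^ DIM(real^'n))) *\<^sub>R integral bx g)
        ((\<lambda>x. (1 / 1) *\<^sub>R x + -((1 / 1) *\<^sub>R c)) ` cbox (z - (\<chi> j. R + 1)) (z + (\<chi> j. R + 1)))"
      by (rule has_integral_affinity[OF hI]) simp
    have f1: "(\<lambda>x. g (1 *\<^sub>R x + c)) = (\<lambda>x. g (x + c))" by simp
    have f2: "(\<lambda>x. (1 / 1) *\<^sub>R x + -((1 / 1) *\<^sub>R c)) = (\<lambda>x::real^'n. x - c)" by (simp add: fun_eq_iff)
    have f3: "(1 / (\<bar>1::real\<bar> ^ DIM(real^'n))) *\<^sub>R integral bx g = integral bx g" by simp
    have "((\<lambda>x. g (x + c)) has_integral integral bx g) ((\<lambda>x. x - c) ` cbox (z - (\<chi> j. R + 1)) (z + (\<chi> j. R + 1)))"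
      using aff unfolding f1 f2 f3 .
    then have "((\<lambda>x. g (x + c)) has_integral integral bx g) ((\<lambda>x. x - c) ` bx)"
      by (simp only: bx_def)
    then have "((\<lambda>x. if x \<in> (\<lambda>x. x - c) ` bx then g (x + c) else 0) has_integral integral bx g) UNIV"
      by (simp only: has_integral_restrict_UNIV)
    moreover have "(\<lambda>x. if x \<in> (\<lambda>x. x - c) ` bx then g (x + c) else 0)
                 = (\<lambda>x. if x \<in> bx then g (x + c) else 0)"
    proof
      fix x
      show "(if x \<in> (\<lambda>x. x - c) ` bx then g (x + c) else 0) = (if x \<in> bx then g (x + c) else 0)"
      proof (cases "x + c \<in> ball z R")
        case True
        have "x + c - 0 *\<^sub>R axis i 1 \<in> bx" unfolding bx_def by (rule box_mem[OF True]) simp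
        then have m1: "x + c \<in> bx" by simp
        have "x = (x + c) - c" by simp
        then have m1': "x \<in> (\<lambda>x. x - c) ` bx" using m1 by (rule rev_image_eqI[rotated])
        have "x + c - h *\<^sub>R axis i 1 \<in> bx" unfolding bx_def by (rule box_mem[OF True h1])
        moreover have "x + c - h *\<^sub>R axis i 1 = x" unfolding c_def e_def by simp
        ultimately have m2: "x \<in> bx" by simp
        show ?thesis using m1' m2 by simp
      next
        case False
        then have "g (x + c) = 0" by (rule zg)
        then show ?thesis by simp
      qed
    qed
    ultimately have "((\<lambda>x. if x \<in> bx then g (x + c) else 0) has_integral integral bx g) UNIV"
      by (simp only:)
    then have "((\<lambda>x. g (x + c)) has_integral integral bx g) bx"
      by (simp only: has_integral_restrict_UNIV)
    then have i1: "integral bx (\<lambda>x. g (x + c)) = integral bx g" by (rule integral_unique)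
    have i0: "\<Phi> 0 = integral bx g" by (simp add: \<Phi>_def)
    show ?thesis using i1 i0 by (simp add: \<Phi>_def c_def)
  qed
  have der: "(\<Phi> has_field_derivative integral bx (\<lambda>x. g' (x + 0 *\<^sub>R e))) (at 0 within ball 0 1)"
    unfolding \<Phi>_def bx_def
  proof (rule leibniz_rule_field_derivative[where fx="\<lambda>h x. g' (x + h *\<^sub>R e)"])
    fix h x
    have "((\<lambda>k. g ((x + h *\<^sub>R e) + k *\<^sub>R e)) has_real_derivative g' (x + h *\<^sub>R e)) (at 0)"
      using dg[of "x + h *\<^sub>R e"] by (simp add: e_def)
    then have "((\<lambda>h. g (x + h *\<^sub>R e)) has_real_derivative g' (x + h *\<^sub>R e)) (at h)"
      by (rule dir_shift[of g "\<lambda>h. x + h *\<^sub>R e"]) (simp add: scaleR_add_left algebra_simps)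
    then show "((\<lambda>h. g (x + h *\<^sub>R e)) has_field_derivative g' (x + h *\<^sub>R e)) (at h within ball 0 1)"
      by (rule has_field_derivative_at_within)
  next
    fix h :: real
    show "(\<lambda>x. g (x + h *\<^sub>R e)) integrable_on cbox (z - (\<chi> j. R + 1)) (z + (\<chi> j. R + 1))"
      by (rule integrable_continuous)
         (intro continuous_on_compose2[OF cg] continuous_intros; auto)
  next
    show "continuous_on (ball 0 1 \<times> cbox (z - (\<chi> j. R + 1)) (z + (\<chi> j. R + 1)))
       (\<lambda>(h, x). g' (x + h *\<^sub>R e))"
    proof -
      have "continuous_on UNIV (\<lambda>w::real \<times> (real^'n). g' (snd w + fst w *\<^sub>R e))"
        by (rule continuous_on_compose2[OF cg']) (auto intro!: continuous_intros)
      then show ?thesis unfolding split_beta by (rule continuous_on_subset[of UNIV]) auto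
    qed
  next
    show "0 \<in> ball (0::real) 1" by simp
  next
    show "convex (ball (0::real) 1)" by (rule convex_ball)
  qed
  have ie: "integral bx (\<lambda>x. g' (x + 0 *\<^sub>R e)) = integral bx g'" by simp
  have aw: "at (0::real) within ball 0 1 = at 0" by (rule at_within_open) auto
  have "(\<Phi> has_field_derivative integral bx g') (at 0)"
    using der unfolding ie aw .
  then have "((\<lambda>_. \<Phi> 0) has_field_derivative integral bx g') (at 0)"
    by (rule has_field_derivative_transform_within_open[of _ _ _ "ball 0 1"]) (simp, simp, rule const)
  then have "integral bx g' = 0" by (rule DERIV_unique[OF _ DERIV_const])
  then show ?thesis by (simp add: bx_def)
qed




lemma space_ibp:
  fixes G G' :: "(real^'n) \<times> real \<Rightarrow> real" and z :: "real^'n"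
  assumes dG: "\<And>w. snd w \<in> {a..s} \<Longrightarrow> ((\<lambda>h. G (w + h *\<^sub>R sdir i)) has_real_derivative G' w) (at 0)"
    and cG: "\<And>w. snd w \<in> {a..s} \<Longrightarrow> isCont G w"
    and cG': "\<And>w. snd w \<in> {a..s} \<Longrightarrow> isCont G' w"
    and zG: "\<And>w. fst w \<notin> ball z R \<Longrightarrow> G w = 0"
  shows "integral (cbox (z - (\<chi> j. R + 1), a) (z + (\<chi> j. R + 1), s)) G' = 0"
proof -
  define lo where "lo = z - (\<chi> j. R + 1)"
  define hi where "hi = z + (\<chi> j. R + 1)"
  have cont: "continuous_on (cbox (lo, a) (hi, s)) G'"
    by (intro continuous_at_imp_continuous_on ballI cG') (auto simp: cbox_Pair_iff)
  have "integral (cbox (lo, a) (hi, s)) G' = integral (cbox lo hi) (\<lambda>x. integral (cbox a s) (\<lambda>t. G' (x, t)))"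
    by (rule integral_prod_continuous[OF cont])
  also have "\<dots> = integral (cbox a s) (\<lambda>t. integral (cbox lo hi) (\<lambda>x. G' (x, t)))"
    by (rule integral_swap_continuous[where f="\<lambda>x t. G' (x, t)"]) (use cont in simp)
  also have "\<dots> = integral (cbox a s) (\<lambda>t. 0)"
  proof (rule integral_cong)
    fix t assume t: "t \<in> cbox a s"
    then have t': "t \<in> {a..s}" by simp
    show "integral (cbox lo hi) (\<lambda>x. G' (x, t)) = 0"
      unfolding lo_def hi_def
    proof (rule slice_ibp[where g="\<lambda>x. G (x, t)" and i=i])
      fix x
      have "((\<lambda>h. G ((x, t) + h *\<^sub>R sdir i)) has_real_derivative G' (x, t)) (at 0)"
        using dG[of "(x, t)"] t' by simp
      then show "((\<lambda>h. G (x + h *\<^sub>R axis i 1, t)) has_real_derivative G' (x, t)) (at 0)"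
        by (simp add: sdir_def)
    next
      show "continuous_on UNIV (\<lambda>x. G (x, t))"
        by (intro continuous_at_imp_continuous_on ballI continuous_intros
              continuous_at_compose[where f="\<lambda>x. (x, t)" and g=G, unfolded o_def] cG) (use t' in auto)
    next
      show "continuous_on UNIV (\<lambda>x. G' (x, t))"
        by (intro continuous_at_imp_continuous_on ballI continuous_intros
              continuous_at_compose[where f="\<lambda>x. (x, t)" and g=G', unfolded o_def] cG') (use t' in auto)
    next
      fix x assume "x \<notin> ball z R" then show "G (x, t) = 0" using zG[of "(x, t)"] by simp
    qed
  qed
  also have "\<dots> = 0" by simp
  finally show ?thesis by (simp add: lo_def hi_def)
qed

lemma time_ftc:
  fixes H H' :: "(real^'n) \<times> real \<Rightarrow> real"
  assumes as: "a \<le> s"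
    and dH: "\<And>w. snd w \<in> {a..s} \<Longrightarrow> ((\<lambda>h. H (w + h *\<^sub>R (0, 1))) has_real_derivative H' w) (at 0)"
    and cH': "\<And>w. snd w \<in> {a..s} \<Longrightarrow> isCont H' w"
    and H0: "\<And>x. H (x, a) = 0" and Hs: "\<And>x. H (x, s) \<ge> 0"
  shows "integral (cbox (lo, a) (hi, s)) H' \<ge> 0"
proof -
  have cont: "continuous_on (cbox (lo, a) (hi, s)) H'"
    by (intro continuous_at_imp_continuous_on ballI cH') (auto simp: cbox_Pair_iff)
  have eq: "integral (cbox (lo, a) (hi, s)) H' = integral (cbox lo hi) (\<lambda>x. integral (cbox a s) (\<lambda>t. H' (x, t)))"
    by (rule integral_prod_continuous[OF cont])
  have inner: "integral (cbox a s) (\<lambda>t. H' (x, t)) = H (x, s)" for x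
  proof -
    have "((\<lambda>t. H' (x, t)) has_integral H (x, s) - H (x, a)) {a..s}"
    proof (rule fundamental_theorem_of_calculus[OF as])
      fix t assume t: "t \<in> {a..s}"
      have "((\<lambda>k. H ((x, t) + k *\<^sub>R (0, 1))) has_real_derivative H' (x, t)) (at 0)"
        using dH[of "(x, t)"] t by simp
      then have "((\<lambda>t. H (x, t)) has_real_derivative H' (x, t)) (at t)"
        by (rule dir_shift[of H "\<lambda>t. (x, t)"]) simp
      then show "((\<lambda>t. H (x, t)) has_vector_derivative H' (x, t)) (at t within {a..s})"
        by (simp add: has_real_derivative_iff_has_vector_derivative[symmetric] has_field_derivative_at_within)
    qed
    then show ?thesis using H0 by (simp add: integral_unique)
  qed
  show ?thesis
  proof (cases "(\<lambda>x. integral (cbox a s) (\<lambda>t. H' (x, t))) integrable_on cbox lo hi")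
    case True
    then show ?thesis unfolding eq by (rule integral_nonneg) (metis inner Hs)
  next
    case False
    then show ?thesis unfolding eq by (simp add: not_integrable_integral)
  qed
qed

lemma Q_to_box:
  fixes F :: "(real^'n) \<times> real \<Rightarrow> real" and z :: "real^'n"
  assumes supp: "\<And>w. F w \<noteq> 0 \<Longrightarrow> fst w \<in> ball z R \<and> a < snd w"
  shows "integral (ball z R \<times> {a<..<s}) F = integral (cbox (z - (\<chi> j. R + 1), a) (z + (\<chi> j. R + 1), s)) F"
proof -
  define Q where "Q = ball z R \<times> {a<..<s}"
  define B where "B = cbox (z - (\<chi> j. R + 1), a) (z + (\<chi> j. R + 1), s)"
  have neg: "negligible {w::(real^'n) \<times> real. w \<bullet> (0, 1) = s}"
    by (rule negligible_standard_hyperplane) (simp add: Basis_prod_def)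
  have "integral UNIV (\<lambda>w. if w \<in> Q then F w else 0) = integral UNIV (\<lambda>w. if w \<in> B then F w else 0)"
  proof (rule integral_spike[OF neg])
    fix w :: "(real^'n) \<times> real"
    assume w: "w \<in> UNIV - {w. w \<bullet> (0, 1) = s}"
    obtain x t where wx: "w = (x, t)" by fastforce
    have ts: "t \<noteq> s" using w wx by simp
    show "(if w \<in> B then F w else 0) = (if w \<in> Q then F w else 0)"
    proof (cases "F w = 0")
      case True then show ?thesis by simp
    next
      case False
      then have xb: "x \<in> ball z R" and at: "a < t" using supp[of w] wx by auto
      have xbox: "x \<in> cbox (z - (\<chi> j. R + 1)) (z + (\<chi> j. R + 1))"
        using box_mem[OF xb, of 0] by simp
      have "w \<in> B \<longleftrightarrow> w \<in> Q"
        using xb at ts xbox by (auto simp: B_def Q_def wx cbox_Pair_iff)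
      then show ?thesis by simp
    qed
  qed
  then show ?thesis unfolding Q_def B_def integral_restrict_UNIV .
qed




lemma normsq_vec:
  fixes x :: "real^'n"
  shows "(norm x)\<^sup>2 = (\<Sum>i\<in>UNIV. (x$i)\<^sup>2)"
  unfolding power2_norm_eq_inner inner_vec_def by (simp add: power2_eq_square)

lemma normsq_mat:
  fixes X :: "real^'n^'m"
  shows "(norm X)\<^sup>2 = (\<Sum>i\<in>UNIV. (norm (X$i))\<^sup>2)"
  by (simp add: power2_norm_eq_inner inner_vec_def)

lemma normsq_mat2:
  fixes X :: "real^'n^'m"
  shows "(norm X)\<^sup>2 = (\<Sum>i\<in>UNIV. \<Sum>j\<in>UNIV. (X$i$j)\<^sup>2)"
  unfolding normsq_mat normsq_vec ..

lemma norm_mv: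
  fixes X :: "real^'n^'m" and q :: "real^'n"
  shows "norm (X *v q) \<le> norm X * norm q"
proof -
  have comp: "((X *v q)$i)\<^sup>2 \<le> (norm (X$i))\<^sup>2 * (norm q)\<^sup>2" for i
  proof -
    have "(X *v q)$i = X$i \<bullet> q" by (simp add: matrix_vector_mult_def inner_vec_def mult.commute)
    then have "\<bar>(X *v q)$i\<bar> \<le> norm (X$i) * norm q" using Cauchy_Schwarz_ineq2 by simp
    then have "\<bar>(X *v q)$i\<bar>\<^sup>2 \<le> (norm (X$i) * norm q)\<^sup>2" by (rule power_mono) simp
    then show ?thesis by (simp add: power_mult_distrib)
  qed
  have "(norm (X *v q))\<^sup>2 = (\<Sum>i\<in>UNIV. ((X *v q)$i)\<^sup>2)" by (rule normsq_vec)
  also have "\<dots> \<le> (\<Sum>i\<in>UNIV. (norm (X$i))\<^sup>2 * (norm q)\<^sup>2)" by (rule sum_mono) (rule comp)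
  also have "\<dots> = (norm X * norm q)\<^sup>2"
    by (simp add: normsq_mat power_mult_distrib sum_distrib_right)
  finally show ?thesis by (rule power2_le_imp_le) simp
qed

lemma trace_bound:
  fixes X :: "real^'n^'n"
  shows "\<bar>trace X\<bar> \<le> real CARD('n) * norm X"
proof -
  have "\<bar>trace X\<bar> \<le> (\<Sum>i\<in>UNIV. \<bar>X$i$i\<bar>)" unfolding trace_def by (rule sum_abs)
  also have "\<dots> \<le> of_nat (card (UNIV::'n set)) * norm X"
  proof (rule sum_bounded_above)
    fix i :: 'n
    have "\<bar>X$i$i\<bar> \<le> norm (X$i)" by (rule component_le_norm_cart)
    also have "\<dots> \<le> norm X"
    proof (rule power2_le_imp_le)
      show "(norm (X$i))\<^sup>2 \<le> (norm X)\<^sup>2" unfolding normsq_mat[of X]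
        by (rule member_le_sum) auto
    qed simp
    finally show "\<bar>X$i$i\<bar> \<le> norm X" .
  qed
  finally show ?thesis by simp
qed

lemma eq_bound:
  fixes X :: "real^'n^'n" and q :: "real^'n"
  assumes eq: "ut - trace X - (p - 2) * ((X *v q) \<bullet> q) / ((norm q)\<^sup>2 + eps) = 0" and eps: "eps > 0"
  shows "\<bar>ut\<bar> \<le> (real CARD('n) + \<bar>p - 2\<bar>) * norm X"
proof -
  have d: "(norm q)\<^sup>2 + eps > 0" using eps by (simp add: add_nonneg_pos)
  have "\<bar>(X *v q) \<bullet> q\<bar> \<le> norm (X *v q) * norm q" by (rule Cauchy_Schwarz_ineq2)
  also have "\<dots> \<le> norm X * norm q * norm q" by (rule mult_right_mono[OF norm_mv]) simp
  also have "\<dots> \<le> norm X * ((norm q)\<^sup>2 + eps)"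
  proof -
    have "norm q * norm q \<le> (norm q)\<^sup>2 + eps" using eps by (simp add: power2_eq_square)
    then show ?thesis by (simp add: mult.assoc mult_left_mono)
  qed
  finally have "\<bar>(X *v q) \<bullet> q\<bar> / ((norm q)\<^sup>2 + eps) \<le> norm X"
    using d by (simp add: divide_le_eq)
  then have fr: "\<bar>(X *v q) \<bullet> q / ((norm q)\<^sup>2 + eps)\<bar> \<le> norm X" using d by simp
  have "ut = trace X + (p - 2) * ((X *v q) \<bullet> q / ((norm q)\<^sup>2 + eps))" using eq by simp
  have "\<bar>ut\<bar> \<le> \<bar>trace X\<bar> + \<bar>p - 2\<bar> * \<bar>(X *v q) \<bullet> q / ((norm q)\<^sup>2 + eps)\<bar>"
  proof -
    have "\<bar>ut\<bar> \<le> \<bar>trace X\<bar> + \<bar>(p - 2) * ((X *v q) \<bullet> q / ((norm q)\<^sup>2 + eps))\<bar>"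
      unfolding \<open>ut = _\<close> by (rule abs_triangle_ineq)
    then show ?thesis by (simp only: abs_mult)
  qed
  also have "\<dots> \<le> real CARD('n) * norm X + \<bar>p - 2\<bar> * norm X"
    by (intro add_mono trace_bound mult_left_mono fr) simp
  finally show ?thesis by (simp add: algebra_simps)
qed




lemma pw1:
  fixes L ut f N K nn \<eta> C Bv :: real
  assumes "\<bar>L\<bar> \<le> nn * N" "\<bar>ut\<bar> \<le> K * N" "N \<ge> 0" "nn * K \<le> \<eta>" "Bv \<ge> 0" "C \<ge> 0" "\<eta> > 0"
  shows "L * ut * f\<^sup>2 \<le> \<eta> * (N\<^sup>2 * f\<^sup>2) + C / \<eta> * Bv"
proof -
  have "L * ut * f\<^sup>2 \<le> \<bar>L\<bar> * \<bar>ut\<bar> * f\<^sup>2"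
    using mult_right_mono[OF abs_ge_self[of "L * ut"], of "f\<^sup>2"] by (simp add: abs_mult)
  also have "\<dots> \<le> (nn * N) * (K * N) * f\<^sup>2"
  proof -
    have nnN: "0 \<le> nn * N" using assms(1) by (meson abs_ge_zero order_trans)
    show ?thesis by (intro mult_right_mono mult_mono assms) (auto simp: nnN)
  qed
  also have "\<dots> = (nn * K) * (N\<^sup>2 * f\<^sup>2)" by (simp add: power2_eq_square algebra_simps)
  also have "\<dots> \<le> \<eta> * (N\<^sup>2 * f\<^sup>2)" by (intro mult_right_mono assms) simp
  also have "\<dots> \<le> \<eta> * (N\<^sup>2 * f\<^sup>2) + C / \<eta> * Bv" using assms by simp
  finally show ?thesis .
qed

lemma amgm:
  fixes x y e :: real
  assumes "e > 0"
  shows "- (2 * x * y) \<le> e * x\<^sup>2 + y\<^sup>2 / e"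
proof -
  have "0 \<le> (e * x + y)\<^sup>2 / e" using assms by simp
  also have "(e * x + y)\<^sup>2 / e = e * x\<^sup>2 + y\<^sup>2 / e + 2 * x * y"
    using assms by (simp add: power2_eq_square field_simps)
  finally show ?thesis by simp
qed

lemma pw2:
  fixes a b :: "'n::finite \<Rightarrow> real" and ut f ft N K \<eta> C0 :: real
  assumes ut: "\<bar>ut\<bar> \<le> K * N" and K: "K > 0" and eta: "\<eta> > 0" and eC: "\<eta> < C0"
  shows "(\<Sum>i\<in>UNIV. a i * a i * (f * ft) - 2 * a i * ut * f * b i)
     \<le> \<eta> * (N\<^sup>2 * f\<^sup>2) + (C0 + real CARD('n) * K\<^sup>2) / \<eta> *
        ((\<Sum>i\<in>UNIV. (a i)\<^sup>2) * ((\<Sum>i\<in>UNIV. (b i)\<^sup>2) + \<bar>f * ft\<bar>))"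
proof -
  define nn where "nn = real CARD('n)"
  have nn: "nn > 0" by (simp add: nn_def)
  define SA where "SA = (\<Sum>i\<in>UNIV. (a i)\<^sup>2)"
  define SB where "SB = (\<Sum>i\<in>UNIV. (b i)\<^sup>2)"
  have SA0: "SA \<ge> 0" and SB0: "SB \<ge> 0" by (simp_all add: SA_def SB_def sum_nonneg)
  have C0: "C0 > 0" using eta eC by simp
  define e where "e = \<eta> / (nn * K\<^sup>2)"
  have e0: "e > 0" using eta nn K by (simp add: e_def)
  have s1: "(\<Sum>i\<in>UNIV. a i * a i * (f * ft)) \<le> C0 / \<eta> * (SA * \<bar>f * ft\<bar>)"
  proof -
    have "(\<Sum>i\<in>UNIV. a i * a i * (f * ft)) = SA * (f * ft)"
      by (simp add: SA_def sum_distrib_right power2_eq_square)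
    also have "\<dots> \<le> SA * \<bar>f * ft\<bar>" using SA0 by (intro mult_left_mono) auto
    also have "\<dots> \<le> C0 / \<eta> * (SA * \<bar>f * ft\<bar>)"
    proof -
      have "1 \<le> C0 / \<eta>" using eta eC by simp
      moreover have "0 \<le> SA * \<bar>f * ft\<bar>" using SA0 by simp
      ultimately show ?thesis using mult_right_mono[of 1 "C0 / \<eta>" "SA * \<bar>f * ft\<bar>"] by simp
    qed
    finally show ?thesis .
  qed
  have s2: "(\<Sum>i\<in>UNIV. - (2 * a i * ut * f * b i)) \<le> (\<Sum>i\<in>UNIV. e * (ut * f)\<^sup>2 + (a i * b i)\<^sup>2 / e)"
  proof (rule sum_mono)
    fix i
    show "- (2 * a i * ut * f * b i) \<le> e * (ut * f)\<^sup>2 + (a i * b i)\<^sup>2 / e"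
      using amgm[OF e0, of "ut * f" "a i * b i"] by (simp add: algebra_simps)
  qed
  have s3: "(\<Sum>i\<in>UNIV. e * (ut * f)\<^sup>2 + (a i * b i)\<^sup>2 / e) = nn * e * (ut * f)\<^sup>2 + (\<Sum>i\<in>UNIV. (a i)\<^sup>2 * (b i)\<^sup>2) / e"
    by (simp add: sum.distrib nn_def sum_divide_distrib power_mult_distrib)
  have s4: "nn * e * (ut * f)\<^sup>2 \<le> \<eta> * (N\<^sup>2 * f\<^sup>2)"
  proof -
    have "ut\<^sup>2 \<le> (K * N)\<^sup>2" using power_mono[OF ut abs_ge_zero, of 2] by simp
    then have "ut\<^sup>2 * f\<^sup>2 \<le> K\<^sup>2 * (N\<^sup>2 * f\<^sup>2)"
      using mult_right_mono[of "ut\<^sup>2" "(K * N)\<^sup>2" "f\<^sup>2"] by (simp add: power_mult_distrib mult.assoc)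
    then have "nn * e * (ut\<^sup>2 * f\<^sup>2) \<le> nn * e * (K\<^sup>2 * (N\<^sup>2 * f\<^sup>2))"
      using nn e0 by (intro mult_left_mono) auto
    also have "\<dots> = \<eta> * (N\<^sup>2 * f\<^sup>2)" using nn K by (simp add: e_def)
    finally show ?thesis by (simp add: power_mult_distrib)
  qed
  have s5: "(\<Sum>i\<in>UNIV. (a i)\<^sup>2 * (b i)\<^sup>2) \<le> SA * SB"
  proof -
    have "(\<Sum>i\<in>UNIV. (a i)\<^sup>2 * (b i)\<^sup>2) \<le> (\<Sum>i\<in>UNIV. (a i)\<^sup>2 * SB)"
    proof (rule sum_mono)
      fix i
      have "(b i)\<^sup>2 \<le> SB" unfolding SB_def by (rule member_le_sum) auto
      then show "(a i)\<^sup>2 * (b i)\<^sup>2 \<le> (a i)\<^sup>2 * SB" by (intro mult_left_mono) auto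
    qed
    also have "\<dots> = SA * SB" by (simp add: SA_def sum_distrib_right)
    finally show ?thesis .
  qed
  have s6: "(\<Sum>i\<in>UNIV. (a i)\<^sup>2 * (b i)\<^sup>2) / e \<le> nn * K\<^sup>2 / \<eta> * (SA * SB)"
  proof -
    have "(\<Sum>i\<in>UNIV. (a i)\<^sup>2 * (b i)\<^sup>2) / e \<le> (SA * SB) / e" using s5 e0 by (simp add: divide_right_mono)
    also have "\<dots> = nn * K\<^sup>2 / \<eta> * (SA * SB)" using nn K eta by (simp add: e_def)
    finally show ?thesis .
  qed
  have tot: "(\<Sum>i\<in>UNIV. a i * a i * (f * ft) - 2 * a i * ut * f * b i)
      = (\<Sum>i\<in>UNIV. a i * a i * (f * ft)) + (\<Sum>i\<in>UNIV. - (2 * a i * ut * f * b i))"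
    by (simp add: sum.distrib[symmetric])
  have "(\<Sum>i\<in>UNIV. a i * a i * (f * ft) - 2 * a i * ut * f * b i)
      \<le> C0 / \<eta> * (SA * \<bar>f * ft\<bar>) + (\<eta> * (N\<^sup>2 * f\<^sup>2) + nn * K\<^sup>2 / \<eta> * (SA * SB))"
    using tot s1 s2 s3 s4 s6 by linarith
  also have "\<dots> \<le> \<eta> * (N\<^sup>2 * f\<^sup>2) + (C0 + nn * K\<^sup>2) / \<eta> * (SA * (SB + \<bar>f * ft\<bar>))"
  proof -
    have x1: "C0 / \<eta> * (SA * \<bar>f * ft\<bar>) \<le> C0 / \<eta> * (SA * (SB + \<bar>f * ft\<bar>))"
      using C0 eta SA0 SB0 by (intro mult_left_mono) (auto intro: mult_left_mono)
    have x2: "nn * K\<^sup>2 / \<eta> * (SA * SB) \<le> nn * K\<^sup>2 / \<eta> * (SA * (SB + \<bar>f * ft\<bar>))"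
      using nn eta SA0 SB0 by (intro mult_left_mono) (auto intro: mult_left_mono)
    have x3: "(C0 + nn * K\<^sup>2) / \<eta> * (SA * (SB + \<bar>f * ft\<bar>)) = C0 / \<eta> * (SA * (SB + \<bar>f * ft\<bar>)) + nn * K\<^sup>2 / \<eta> * (SA * (SB + \<bar>f * ft\<bar>))"
      by (simp add: add_divide_distrib distrib_right)
    show ?thesis using x1 x2 x3 by linarith
  qed
  finally show ?thesis by (simp add: SA_def SB_def nn_def)
qed




lemma main_est:
  fixes ue \<phi> :: "(real^'n) \<times> real \<Rightarrow> real" and z c :: "real^'n"
  assumes oOm: "open Om" and eps: "eps > 0" and sm: "smooth_on Om ue"
    and vsol: "visc_sol p eps Om ue" and R: "R > 0" and as: "a < s"
    and cc: "compactly_contained (ball z R \<times> {a<..<s}) Om"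
    and cf: "Cc_inf (ball z R \<times> {a<..<s2}) \<phi>" and eta: "\<eta> > 0"
  shows "integral (ball z R \<times> {a<..<s}) (\<lambda>w. Lap ue w * Dt ue w * (\<phi> w)\<^sup>2)
      \<le> \<eta> * integral (ball z R \<times> {a<..<s}) (\<lambda>w. (norm (D2x ue w))\<^sup>2 * (\<phi> w)\<^sup>2)
        + (real CARD('n) * (real CARD('n) + \<bar>p - 2\<bar>) + real CARD('n) * (real CARD('n) + \<bar>p - 2\<bar>)\<^sup>2) / \<eta>
          * integral (ball z R \<times> {a<..<s})
              (\<lambda>w. (norm (Dx ue w - c))\<^sup>2 * ((norm (Dx \<phi> w))\<^sup>2 + \<bar>\<phi> w * Dt \<phi> w\<bar>))"
proof -
  define nn where "nn = real CARD('n)"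
  define K where "K = nn + \<bar>p - 2\<bar>"
  define C0 where "C0 = nn * K"
  define C where "C = C0 + nn * K\<^sup>2"
  have nn: "nn > 0" by (simp add: nn_def)
  have K: "K > 0" using nn by (simp add: K_def add_pos_nonneg)
  have C0: "C0 > 0" using nn K by (simp add: C0_def)
  have Cpos: "C > 0" using C0 nn K by (simp add: C_def add_pos_nonneg)
  define et where "et = (0::real^'n, 1::real)"
  define S where "S = ball z R \<times> {a<..<s2}"
  define Ks where "Ks = closure {w. \<phi> w \<noteq> 0}"
  have oS: "open S" by (simp add: S_def open_Times)
  have KsS: "Ks \<subseteq> S" using cf by (simp add: Cc_inf_def Ks_def S_def)
  have sm\<phi>: "smooth_on S \<phi>" using cf by (simp add: Cc_inf_def S_def)
  have \<phi>0: "\<phi> w = 0" if "w \<notin> Ks" for w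
    using that closure_subset[of "{w. \<phi> w \<noteq> 0}"] by (auto simp: Ks_def)
  have oK: "open (- Ks)" unfolding Ks_def by (rule open_Compl) simp
  have clQ: "cball z R \<times> {a..s} \<subseteq> Om"
    using cc as R by (simp add: compactly_contained_def closure_Times)
  have suppK: "fst w \<in> ball z R \<and> a < snd w" if "w \<in> Ks" for w
    using that KsS by (auto simp: S_def mem_Times_iff)
  have dich: "w \<in> Om \<or> w \<notin> Ks" if "snd w \<in> {a..s}" for w
  proof (cases "w \<in> Ks")
    case True
    then have "w \<in> cball z R \<times> {a..s}" using suppK[OF True] that by (auto simp: mem_Times_iff)
    then show ?thesis using clQ by auto
  qed simp
  have bas_i: "sdir i \<in> Basis" for i :: 'n
    by (simp add: sdir_def Basis_prod_def axis_in_Basis_iff image_iff)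
  have bas_t: "et \<in> Basis" by (simp add: et_def Basis_prod_def)
  have \<phi>Z: "pdl vs \<phi> w = 0" if "w \<notin> Ks" for vs w
    by (rule pdl_zero[OF oK]) (use \<phi>0 that in auto)
  have \<phi>C: "isCont (pdl vs \<phi>) w" if "set vs \<subseteq> Basis" for vs w
  proof (cases "w \<in> S")
    case True then show ?thesis using smooth_cont[OF sm\<phi> oS that] by blast
  next
    case False then have "w \<notin> Ks" using KsS by auto
    then have "w \<in> - Ks" by simp
    then show ?thesis by (rule zero_near_cont[OF oK]) (use \<phi>Z in auto)
  qed
  have \<phi>D: "((\<lambda>h. pdl vs \<phi> (w + h *\<^sub>R v)) has_real_derivative pdl (v # vs) \<phi> w) (at 0)"
    if "set vs \<subseteq> Basis" "v \<in> Basis" for vs v w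
  proof (cases "w \<in> S")
    case True then show ?thesis using smooth_der[OF sm\<phi> that True] by blast
  next
    case False then have w: "w \<notin> Ks" using KsS by auto
    have "((\<lambda>h. pdl vs \<phi> (w + h *\<^sub>R v)) has_real_derivative 0) (at 0)"
      by (rule zero_near_deriv[OF oK]) (use \<phi>Z w in auto)
    then show ?thesis using \<phi>Z[OF w, of "v # vs"] by simp
  qed
  have \<phi>D0: "((\<lambda>h. \<phi> (w + h *\<^sub>R v)) has_real_derivative pdl [v] \<phi> w) (at 0)" if "v \<in> Basis" for v w
    using \<phi>D[of "[]" v w] that by simp
  have \<phi>C0: "isCont \<phi> w" for w using \<phi>C[of "[]" w] by simp
  have uC: "isCont (pdl vs ue) w" if "set vs \<subseteq> Basis" "w \<in> Om" for vs w
    by (rule smooth_cont[OF sm oOm that])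
  have uD: "((\<lambda>h. pdl vs ue (w + h *\<^sub>R v)) has_real_derivative pdl (v # vs) ue w) (at 0)"
    if "set vs \<subseteq> Basis" "v \<in> Basis" "w \<in> Om" for vs v w
    by (rule smooth_der[OF sm that])
  have schw: "pdl [sdir i, et] ue w = pdl [et, sdir i] ue w" if "w \<in> Om" for i w
  proof -
    have "pdl [et, sdir i] ue w = pdl [sdir i, et] ue w"
    proof (rule schwarz[of Om w ue "sdir i" "pdl [sdir i] ue" et "pdl [et] ue", OF oOm that])
      fix y assume y: "y \<in> Om"
      show "((\<lambda>h. ue (y + h *\<^sub>R sdir i)) has_real_derivative pdl [sdir i] ue y) (at 0)"
        using uD[of "[]" "sdir i" y] y bas_i by simp
      show "((\<lambda>h. ue (y + h *\<^sub>R et)) has_real_derivative pdl [et] ue y) (at 0)"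
        using uD[of "[]" et y] y bas_t by simp
      show "((\<lambda>h. pdl [sdir i] ue (y + h *\<^sub>R et)) has_real_derivative pdl [et, sdir i] ue y) (at 0)"
        using uD[of "[sdir i]" et y] y bas_i bas_t by simp
      show "((\<lambda>h. pdl [et] ue (y + h *\<^sub>R sdir i)) has_real_derivative pdl [sdir i, et] ue y) (at 0)"
        using uD[of "[et]" "sdir i" y] y bas_i bas_t by simp
    next
      show "continuous_on Om (pdl [et, sdir i] ue)"
        by (intro continuous_at_imp_continuous_on ballI uC) (auto simp: bas_i bas_t)
      show "continuous_on Om (pdl [sdir i, et] ue)"
        by (intro continuous_at_imp_continuous_on ballI uC) (auto simp: bas_i bas_t)
    qed
    then show ?thesis by simp
  qed
  have classical: "\<bar>Dt ue w\<bar> \<le> K * norm (D2x ue w)" if w: "w \<in> Om" for w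
  proof -
    have ck: "Ck_on 2 Om ue" using sm by (simp add: smooth_on_def)
    let ?A = "Dt ue w - Lap ue w - (p - 2) * (((D2x ue w) *v (Dx ue w)) \<bullet> Dx ue w) / ((norm (Dx ue w))\<^sup>2 + eps)"
    have "?A \<ge> 0"
      using vsol w ck oOm eps unfolding visc_sol_def visc_super_def by (metis order_refl subset_refl)
    moreover have "?A \<le> 0"
      using vsol w ck oOm eps unfolding visc_sol_def visc_sub_def by (metis order_refl subset_refl)
    ultimately have "?A = 0" by simp
    then have "Dt ue w - trace (D2x ue w) - (p - 2) * (((D2x ue w) *v (Dx ue w)) \<bullet> Dx ue w) / ((norm (Dx ue w))\<^sup>2 + eps) = 0"
      by (simp add: Lap_def)
    from eq_bound[OF this eps] show ?thesis by (simp add: K_def nn_def)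
  qed

  define lo where "lo = z - (\<chi> j. R + 1)"
  define hi where "hi = z + (\<chi> j. R + 1)"
  define Bx where "Bx = cbox (lo, a) (hi, s)"
  have inBx: "snd w \<in> {a..s}" if "w \<in> Bx" for w
    using that by (cases w) (auto simp: Bx_def cbox_Pair_iff)
  have contH: "isCont F w"
    if "snd w \<in> {a..s}" "\<And>w. w \<in> Om \<Longrightarrow> isCont F w" "\<And>w. w \<notin> Ks \<Longrightarrow> F w = 0" for F :: "(real^'n) \<times> real \<Rightarrow> real" and w
  proof (cases "w \<in> Om")
    case True then show ?thesis using that(2) by blast
  next
    case False then have "w \<in> - Ks" using dich[OF that(1)] by simp
    then show ?thesis by (rule zero_near_cont[OF oK]) (use that(3) in auto)
  qed
  have intF: "F integrable_on Bx"
    if "\<And>w. w \<in> Om \<Longrightarrow> isCont F w" "\<And>w. w \<notin> Ks \<Longrightarrow> F w = 0" for F :: "(real^'n) \<times> real \<Rightarrow> real"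
  proof -
    have "continuous_on Bx F"
      by (intro continuous_at_imp_continuous_on ballI contH[OF inBx that]) auto
    then show ?thesis unfolding Bx_def by (rule integrable_continuous)
  qed
  have derH: "((\<lambda>h. F (w + h *\<^sub>R v)) has_real_derivative F' w) (at 0)"
    if "snd w \<in> {a..s}" "\<And>w. w \<in> Om \<Longrightarrow> ((\<lambda>h. F (w + h *\<^sub>R v)) has_real_derivative F' w) (at 0)"
       "\<And>w. w \<notin> Ks \<Longrightarrow> F w = 0" "\<And>w. w \<notin> Ks \<Longrightarrow> F' w = 0" for F F' :: "(real^'n) \<times> real \<Rightarrow> real" and v w
  proof (cases "w \<in> Om")
    case True then show ?thesis using that(2) by blast
  next
    case False then have w: "w \<in> - Ks" using dich[OF that(1)] by simp
    have "((\<lambda>h. F (w + h *\<^sub>R v)) has_real_derivative 0) (at 0)"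
      by (rule zero_near_deriv[OF oK w]) (use that(3) in auto)
    then show ?thesis using that(4) w by simp
  qed
  define G where "G i w = (pdl [sdir i] ue w - c$i) * pdl [et] ue w * (\<phi> w * \<phi> w)" for i w
  define G' where "G' i w = pdl [sdir i, sdir i] ue w * pdl [et] ue w * (\<phi> w * \<phi> w)
     + (pdl [sdir i] ue w - c$i) * pdl [sdir i, et] ue w * (\<phi> w * \<phi> w)
     + (pdl [sdir i] ue w - c$i) * pdl [et] ue w * (2 * \<phi> w * pdl [sdir i] \<phi> w)" for i w
  define H where "H i w = (pdl [sdir i] ue w - c$i) * (pdl [sdir i] ue w - c$i) * (\<phi> w * \<phi> w)" for i w
  define H' where "H' i w = 2 * (pdl [sdir i] ue w - c$i) * pdl [et, sdir i] ue w * (\<phi> w * \<phi> w)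
     + (pdl [sdir i] ue w - c$i) * (pdl [sdir i] ue w - c$i) * (2 * \<phi> w * pdl [et] \<phi> w)" for i w
  define Rf where "Rf i w = (pdl [sdir i] ue w - c$i) * (pdl [sdir i] ue w - c$i) * (\<phi> w * pdl [et] \<phi> w)
     - 2 * (pdl [sdir i] ue w - c$i) * pdl [et] ue w * \<phi> w * pdl [sdir i] \<phi> w" for i w
  define Li where "Li i w = pdl [sdir i, sdir i] ue w * pdl [et] ue w * (\<phi> w * \<phi> w)" for i w
  have zG: "G i w = 0" "G' i w = 0" "H i w = 0" "H' i w = 0" "Rf i w = 0" "Li i w = 0" if "w \<notin> Ks" for i w
    using \<phi>0[OF that] \<phi>Z[OF that] by (simp_all add: G_def G'_def H_def H'_def Rf_def Li_def)
  have dG: "((\<lambda>h. G i (w + h *\<^sub>R sdir i)) has_real_derivative G' i w) (at 0)" if "w \<in> Om" for i w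
  proof -
    have d1: "((\<lambda>h. pdl [sdir i] ue (w + h *\<^sub>R sdir i)) has_real_derivative pdl [sdir i, sdir i] ue w) (at 0)"
      using uD[of "[sdir i]" "sdir i" w] that bas_i by simp
    have d2: "((\<lambda>h. pdl [et] ue (w + h *\<^sub>R sdir i)) has_real_derivative pdl [sdir i, et] ue w) (at 0)"
      using uD[of "[et]" "sdir i" w] that bas_i bas_t by simp
    have d3: "((\<lambda>h. \<phi> (w + h *\<^sub>R sdir i)) has_real_derivative pdl [sdir i] \<phi> w) (at 0)"
      using \<phi>D0 bas_i by blast
    show ?thesis unfolding G_def
      by (rule derivative_eq_intros d1 d2 d3 refl)+ (simp add: G'_def algebra_simps)
  qed
  have dH: "((\<lambda>h. H i (w + h *\<^sub>R et)) has_real_derivative H' i w) (at 0)" if "w \<in> Om" for i w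
  proof -
    have d1: "((\<lambda>h. pdl [sdir i] ue (w + h *\<^sub>R et)) has_real_derivative pdl [et, sdir i] ue w) (at 0)"
      using uD[of "[sdir i]" et w] that bas_i bas_t by simp
    have d3: "((\<lambda>h. \<phi> (w + h *\<^sub>R et)) has_real_derivative pdl [et] \<phi> w) (at 0)"
      using \<phi>D0 bas_t by blast
    show ?thesis unfolding H_def
      by (rule derivative_eq_intros d1 d3 refl)+ (simp add: H'_def algebra_simps)
  qed
  have cuI: "isCont (pdl [sdir i] ue) w" "isCont (pdl [et] ue) w" "isCont (pdl [sdir i, sdir j] ue) w"
      "isCont (pdl [sdir i, et] ue) w" "isCont (pdl [et, sdir i] ue) w"
    if "w \<in> Om" for i j w
    by (rule uC[OF _ that]; simp add: bas_i bas_t)+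
  have cpI: "isCont (pdl [sdir i] \<phi>) w" "isCont (pdl [et] \<phi>) w" for i w
    by (rule \<phi>C; simp add: bas_i bas_t)+
  have cG: "isCont (G i) w" "isCont (G' i) w" "isCont (H' i) w" "isCont (Rf i) w" "isCont (Li i) w"
    if "w \<in> Om" for i w
    unfolding G_def G'_def H'_def Rf_def Li_def
    by (intro continuous_intros cuI[OF that] cpI \<phi>C0)+

  define LHSf where "LHSf = (\<lambda>w. Lap ue w * Dt ue w * (\<phi> w)\<^sup>2)"
  define Af where "Af = (\<lambda>w. (norm (D2x ue w))\<^sup>2 * (\<phi> w)\<^sup>2)"
  define Bf where "Bf = (\<lambda>w. (norm (Dx ue w - c))\<^sup>2 * ((norm (Dx \<phi> w))\<^sup>2 + \<bar>\<phi> w * Dt \<phi> w\<bar>))"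
  have LHS_fun: "LHSf = (\<lambda>w. \<Sum>i\<in>UNIV. Li i w)"
    by (rule ext) (simp add: LHSf_def Li_def Lap_def trace_def D2x_def Dt_def et_def sum_distrib_right power2_eq_square)
  have Af_fun: "Af = (\<lambda>w. (\<Sum>i\<in>UNIV. \<Sum>j\<in>UNIV. (pdl [sdir i, sdir j] ue w)\<^sup>2) * (\<phi> w)\<^sup>2)"
    by (rule ext) (simp add: Af_def normsq_mat2 D2x_def)
  have Bf_fun: "Bf = (\<lambda>w. (\<Sum>i\<in>UNIV. (pdl [sdir i] ue w - c$i)\<^sup>2) *
        ((\<Sum>i\<in>UNIV. (pdl [sdir i] \<phi> w)\<^sup>2) + \<bar>\<phi> w * pdl [et] \<phi> w\<bar>))"
    by (rule ext) (simp add: Bf_def normsq_vec Dx_def Dt_def et_def)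
  have Af0: "Af w \<ge> 0" and Bf0: "Bf w \<ge> 0" for w by (simp_all add: Af_def Bf_def)
  have pZ1: "pdir v \<phi> w = 0" if "w \<notin> Ks" for v w using \<phi>Z[OF that, of "[v]"] by simp
  have zL: "LHSf w = 0" "Af w = 0" "Bf w = 0" if "w \<notin> Ks" for w
    using \<phi>0[OF that] pZ1[OF that] zG[OF that] by (simp_all add: LHS_fun Af_fun Bf_fun)
  have cL: "isCont LHSf w" "isCont Af w" "isCont Bf w" if "w \<in> Om" for w
    unfolding LHS_fun Af_fun Bf_fun
    by (intro continuous_intros cuI[OF that] cpI \<phi>C0 cG[OF that])+
  have QB: "integral (ball z R \<times> {a<..<s}) F = integral Bx F"
    if "\<And>w. w \<notin> Ks \<Longrightarrow> F w = 0" for F :: "(real^'n) \<times> real \<Rightarrow> real"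
    unfolding Bx_def lo_def hi_def by (rule Q_to_box) (metis that suppK)
  have iG: "integral Bx (G' i) = 0" for i
    unfolding Bx_def lo_def hi_def
  proof (rule space_ibp[where G="G i" and i=i])
    fix w :: "(real^'n) \<times> real" assume w: "snd w \<in> {a..s}"
    show "((\<lambda>h. G i (w + h *\<^sub>R sdir i)) has_real_derivative G' i w) (at 0)"
      by (rule derH[OF w]) (use dG zG in auto)
    show "isCont (G i) w" by (rule contH[OF w]) (use cG zG in auto)
    show "isCont (G' i) w" by (rule contH[OF w]) (use cG zG in auto)
  next
    fix w :: "(real^'n) \<times> real" assume "fst w \<notin> ball z R"
    then have "w \<notin> Ks" using suppK by blast
    then show "G i w = 0" by (rule zG)
  qed
  have iH: "integral Bx (H' i) \<ge> 0" for i
    unfolding Bx_def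
  proof (rule time_ftc[where H="H i"])
    show "a \<le> s" using as by simp
  next
    fix w :: "(real^'n) \<times> real" assume w: "snd w \<in> {a..s}"
    have "((\<lambda>h. H i (w + h *\<^sub>R et)) has_real_derivative H' i w) (at 0)"
      by (rule derH[OF w]) (use dH zG in auto)
    then show "((\<lambda>h. H i (w + h *\<^sub>R (0, 1))) has_real_derivative H' i w) (at 0)"
      by (simp only: et_def)
    show "isCont (H' i) w" by (rule contH[OF w]) (use cG zG in auto)
  next
    fix x
    have "(x, a) \<notin> Ks" using suppK[of "(x, a)"] by auto
    then show "H i (x, a) = 0" by (rule zG)
  next
    fix x show "H i (x, s) \<ge> 0" unfolding H_def by simp
  qed
  have ident: "Li i w = G' i w + (-1/2) * H' i w + Rf i w" if "snd w \<in> {a..s}" for i w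
  proof (cases "w \<in> Om")
    case True
    have e: "pdl [sdir i, et] ue w = pdl [et, sdir i] ue w" by (rule schw[OF True])
    show ?thesis unfolding Li_def G'_def H'_def Rf_def e by (simp add: algebra_simps)
  next
    case False then have "w \<notin> Ks" using dich[OF that] by simp
    then show ?thesis using zG by simp
  qed
  have intB: "F integrable_on Bx"
    if "\<And>w. w \<in> Om \<Longrightarrow> isCont F w" "\<And>w. w \<notin> Ks \<Longrightarrow> F w = 0" for F :: "(real^'n) \<times> real \<Rightarrow> real"
    by (rule intF[OF that])
  have iLi: "integral Bx (Li i) \<le> integral Bx (Rf i)" for i
  proof -
    have i1: "G' i integrable_on Bx" by (rule intB) (use cG zG in auto)
    have i2: "(\<lambda>w. (-1/2) * H' i w) integrable_on Bx"
      by (rule intB) (auto intro!: continuous_intros cG simp: zG)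
    have i3: "Rf i integrable_on Bx" by (rule intB) (use cG zG in auto)
    have "integral Bx (Li i) = integral Bx (\<lambda>w. G' i w + (-1/2) * H' i w + Rf i w)"
      by (rule integral_cong) (use ident inBx in blast)
    also have "\<dots> = integral Bx (G' i) + (-1/2) * integral Bx (H' i) + integral Bx (Rf i)"
      using integral_add[OF integrable_add[OF i1 i2] i3] integral_add[OF i1 i2]
        integral_mult_right[of Bx "-1/2" "H' i"] by simp
    also have "\<dots> \<le> integral Bx (Rf i)" using iG[of i] iH[of i] by simp
    finally show ?thesis .
  qed
  have iRHS: "integral Bx (\<lambda>w. \<eta> * Af w + C / \<eta> * Bf w) = \<eta> * integral Bx Af + C / \<eta> * integral Bx Bf"
  proof -
    have j1: "(\<lambda>w. \<eta> * Af w) integrable_on Bx"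
      by (rule intB) (use eta in \<open>auto intro!: continuous_intros cL simp: zL\<close>)
    have j2: "(\<lambda>w. C / \<eta> * Bf w) integrable_on Bx"
      by (rule intB) (use eta in \<open>auto intro!: continuous_intros cL simp: zL\<close>)
    show ?thesis using integral_add[OF j1 j2] integral_mult_right[of Bx \<eta> Af]
        integral_mult_right[of Bx "C / \<eta>" Bf] by simp
  qed
  have intR: "(\<lambda>w. \<eta> * Af w + C / \<eta> * Bf w) integrable_on Bx"
    by (rule intB) (use eta in \<open>auto intro!: continuous_intros cL simp: zL\<close>)
  have pwR: "0 \<le> \<eta> * Af w + C / \<eta> * Bf w" for w
    using Af0[of w] Bf0[of w] eta Cpos by simp
  have main_Bx: "integral Bx LHSf \<le> \<eta> * integral Bx Af + C / \<eta> * integral Bx Bf"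
  proof (cases "C0 \<le> \<eta>")
    case True
    have "integral Bx LHSf \<le> integral Bx (\<lambda>w. \<eta> * Af w + C / \<eta> * Bf w)"
    proof (rule integral_le)
      show "LHSf integrable_on Bx" by (rule intB) (use cL zL in auto)
      show "(\<lambda>w. \<eta> * Af w + C / \<eta> * Bf w) integrable_on Bx" by (rule intR)
    next
      fix w assume "w \<in> Bx"
      then have "w \<in> Om \<or> w \<notin> Ks" using dich inBx by blast
      then show "LHSf w \<le> \<eta> * Af w + C / \<eta> * Bf w"
      proof
        assume w: "w \<in> Om"
        have L: "\<bar>Lap ue w\<bar> \<le> nn * norm (D2x ue w)"
          unfolding Lap_def nn_def by (rule trace_bound)
        show ?thesis unfolding LHSf_def Af_def
          by (rule pw1[OF L classical[OF w] norm_ge_zero _ Bf0]) (use True C0_def Cpos eta in auto)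
      next
        assume "w \<notin> Ks" then show ?thesis using zL pwR by simp
      qed
    qed
    then show ?thesis using iRHS by simp
  next
    case False
    then have eC: "\<eta> < C0" by simp
    have "integral Bx LHSf = (\<Sum>i\<in>UNIV. integral Bx (Li i))"
      unfolding LHS_fun by (rule integral_sum) (auto intro!: intB cG simp: zG)
    also have "\<dots> \<le> (\<Sum>i\<in>UNIV. integral Bx (Rf i))" by (rule sum_mono) (rule iLi)
    also have "\<dots> = integral Bx (\<lambda>w. \<Sum>i\<in>UNIV. Rf i w)"
      by (rule integral_sum[symmetric]) (auto intro!: intB cG simp: zG)
    also have "\<dots> \<le> integral Bx (\<lambda>w. \<eta> * Af w + C / \<eta> * Bf w)"
    proof (rule integral_le)
      show "(\<lambda>w. \<Sum>i\<in>UNIV. Rf i w) integrable_on Bx"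
        by (rule intB) (auto intro!: continuous_intros cG simp: zG)
      show "(\<lambda>w. \<eta> * Af w + C / \<eta> * Bf w) integrable_on Bx" by (rule intR)
    next
      fix w assume "w \<in> Bx"
      then have "w \<in> Om \<or> w \<notin> Ks" using dich inBx by blast
      then show "(\<Sum>i\<in>UNIV. Rf i w) \<le> \<eta> * Af w + C / \<eta> * Bf w"
      proof
        assume w: "w \<in> Om"
        have ut: "\<bar>pdl [et] ue w\<bar> \<le> K * norm (D2x ue w)"
          using classical[OF w] by (simp add: Dt_def et_def)
        note P = pw2[OF ut K eta eC, where a="\<lambda>i. pdl [sdir i] ue w - c$i"
            and b="\<lambda>i. pdl [sdir i] \<phi> w" and f="\<phi> w" and ft="pdl [et] \<phi> w"]
        have e1: "(\<Sum>i\<in>UNIV. Rf i w) = (\<Sum>i\<in>UNIV. (pdl [sdir i] ue w - c$i) * (pdl [sdir i] ue w - c$i) * (\<phi> w * pdl [et] \<phi> w)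
             - 2 * (pdl [sdir i] ue w - c$i) * pdl [et] ue w * \<phi> w * pdl [sdir i] \<phi> w)"
          by (simp add: Rf_def)
        have e2: "\<eta> * Af w + C / \<eta> * Bf w = \<eta> * ((norm (D2x ue w))\<^sup>2 * (\<phi> w)\<^sup>2) + (C0 + real CARD('n) * K\<^sup>2) / \<eta> *
             ((\<Sum>i\<in>UNIV. (pdl [sdir i] ue w - c$i)\<^sup>2) * ((\<Sum>i\<in>UNIV. (pdl [sdir i] \<phi> w)\<^sup>2) + \<bar>\<phi> w * pdl [et] \<phi> w\<bar>))"
          unfolding Bf_fun by (simp add: Af_def C_def nn_def)
        show ?thesis unfolding e1 e2 using P by simp
      next
        assume "w \<notin> Ks" then show ?thesis using zG pwR by simp
      qed
    qed
    also have "\<dots> = \<eta> * integral Bx Af + C / \<eta> * integral Bx Bf" by (rule iRHS)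
    finally show ?thesis .
  qed
  have q1: "integral (ball z R \<times> {a<..<s}) LHSf = integral Bx LHSf" by (rule QB) (rule zL)
  have q2: "integral (ball z R \<times> {a<..<s}) Af = integral Bx Af" by (rule QB) (rule zL)
  have q3: "integral (ball z R \<times> {a<..<s}) Bf = integral Bx Bf" by (rule QB) (rule zL)
  have Ceq: "real CARD('n) * (real CARD('n) + \<bar>p - 2\<bar>) + real CARD('n) * (real CARD('n) + \<bar>p - 2\<bar>)\<^sup>2 = C"
    by (simp add: C_def C0_def K_def nn_def)
  have fin: "integral (ball z R \<times> {a<..<s}) LHSf \<le> \<eta> * integral (ball z R \<times> {a<..<s}) Af
      + C / \<eta> * integral (ball z R \<times> {a<..<s}) Bf"
    unfolding q1 q2 q3 by (rule main_Bx)
  show ?thesis using fin unfolding Ceq LHSf_def Af_def Bf_def .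
qed


theorem lemma4p3:
  fixes p :: real
  assumes n2: "CARD('n::finite) \<ge> 2"
    and p_range: "(1 < p \<and> p < 2) \<or> 2 < p"
  shows "\<exists>C>0. \<forall>(\<Omega>::(real^'n) set) (T::real) (u::(real^'n) \<times> real \<Rightarrow> real)
            (U::(real^'n) set) (eps::real) (ue::(real^'n) \<times> real \<Rightarrow> real)
            (r::real) (s::real) (z::real^'n) (\<phi>::(real^'n) \<times> real \<Rightarrow> real)
            (c::real^'n) (\<eta>::real).
      domain \<Omega> \<and> T > 0
      \<and> visc_sol p 0 (\<Omega> \<times> {0<..<T}) u
      \<and> smooth_domain U \<and> compactly_contained U \<Omega>
      \<and> 0 < eps \<and> eps \<le> 1
      \<and> continuous_on (closure (U \<times> {0<..<T})) ue
      \<and> smooth_on (U \<times> {0<..<T}) ue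
      \<and> visc_sol p eps (U \<times> {0<..<T}) ue
      \<and> (\<forall>w\<in>par_boundary U T. ue w = u w)
      \<and> r > 0
      \<and> compactly_contained (ball z (2*r) \<times> {s - 4*r\<^sup>2<..<s}) (U \<times> {0<..<T})
      \<and> Cc_inf (ball z (2*r) \<times> {s - 4*r\<^sup>2<..<s + 4*r\<^sup>2}) \<phi>
      \<and> \<eta> > 0
      \<longrightarrow>
      integral (ball z (2*r) \<times> {s - 4*r\<^sup>2<..<s})
        (\<lambda>w. Lap ue w * Dt ue w * (\<phi> w)\<^sup>2)
      \<le> \<eta> * integral (ball z (2*r) \<times> {s - 4*r\<^sup>2<..<s})
              (\<lambda>w. (norm (D2x ue w))\<^sup>2 * (\<phi> w)\<^sup>2)
        + C / \<eta> * integral (ball z (2*r) \<times> {s - 4*r\<^sup>2<..<s})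
              (\<lambda>w. (norm (Dx ue w - c))\<^sup>2 * ((norm (Dx \<phi> w))\<^sup>2 + \<bar>\<phi> w * Dt \<phi> w\<bar>))"
proof -
  define C where "C = real CARD('n) * (real CARD('n) + \<bar>p - 2\<bar>) + real CARD('n) * (real CARD('n) + \<bar>p - 2\<bar>)\<^sup>2"
  have Cpos: "C > 0" by (simp add: C_def add_pos_nonneg)
  show ?thesis
    apply (rule exI[of _ C])
    apply (intro conjI allI impI)
     apply (rule Cpos)
    apply (elim conjE)
    subgoal premises prems for \<Omega> T u U eps ue r s z \<phi> c \<eta>
    proof -
      have oU: "open U" using prems by (simp add: smooth_domain_def domain_def)
      have oOm: "open (U \<times> {0<..<T})" using oU by (simp add: open_Times)
      have r: "2 * r > 0" using prems by simp
      have as: "s - 4 * r\<^sup>2 < s" using prems by simp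
      show ?thesis unfolding C_def
        by (rule main_est[OF oOm _ _ _ r as]) (use prems in auto)
    qed
    done
qed

end
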